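(* Let $P_1,P_2,N>0$ and let $\rho_1\in[0,1)$ satisfy $\frac{P_2}{N}\ge\frac{\rho_1^2}{1-\rho_1^2}$. Define $R_1(\rho_1)=\frac12\log\big(1+\frac{P_1(1-\rho_1^2)}{N}\big)$ and $$R_2(\rho_1)=\max_{\rho_2\in[0,1]}\min\Big\{\tfrac12\log\Big(1+\tfrac{P_2(1-\rho_2^2)}{N}\Big),\ \tfrac12\log\Big(\tfrac{P_1+P_2+2\sqrt{P_1P_2}\rho_1\rho_2+N}{P_1(1-\rho_1^2)+N}\Big)\Big\}.$$ Then for every $\epsilon>0$, $(R_1(\rho_1),R_2(\rho_1)+\epsilon)\notin\mathcal R_{\mathrm{CL}}(P_1,P_2,N)$.
   Context: Cover–Leung region: $\mathcal R_{\mathrm{CL}}(P_1,P_2,N)=\bigcup_{\rho_1,\rho_2\in[0,1]}\mathcal R_{\mathrm{CL}}^{(\rho_1,\rho_2)}(P_1,P_2,N)$, where $\mathcal R_{\mathrm{CL}}^{(\rho_1,\rho_2)}(P_1,P_2,N)$ is the set of nonnegative $(R_1,R_2)$ with $R_1\le\frac12\log(1+\frac{P_1(1-\rho_1^2)}{N})$, $R_2\le\frac12\log(1+\frac{P_2(1-\rho_2^2)}{N})$, $R_1+R_2\le\frac12\log(1+\frac{P_1+P_2+2\sqrt{P_1P_2}\rho_1\rho_2}{N})$. *)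

theory Defs
  imports "HOL-Analysis.Analysis"
begin

text \<open>Logarithms are taken base 2 (the choice of base does not affect the statement).\<close>

definition CL_region_rho :: "real \<Rightarrow> real \<Rightarrow> real \<Rightarrow> real \<Rightarrow> real \<Rightarrow> (real \<times> real) set" where
  "CL_region_rho P1 P2 N \<rho>1 \<rho>2 = {(R1, R2). 0 \<le> R1 \<and> 0 \<le> R2 \<and>
      R1 \<le> 1/2 * log 2 (1 + P1 * (1 - \<rho>1^2) / N) \<and>
      R2 \<le> 1/2 * log 2 (1 + P2 * (1 - \<rho>2^2) / N) \<and>
      R1 + R2 \<le> 1/2 * log 2 (1 + (P1 + P2 + 2 * sqrt (P1 * P2) * \<rho>1 * \<rho>2) / N)}"

definition CL_region :: "real \<Rightarrow> real \<Rightarrow> real \<Rightarrow> (real \<times> real) set" where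
  "CL_region P1 P2 N = (\<Union>\<rho>1\<in>{0..1}. \<Union>\<rho>2\<in>{0..1}. CL_region_rho P1 P2 N \<rho>1 \<rho>2)"

definition R1_fun :: "real \<Rightarrow> real \<Rightarrow> real \<Rightarrow> real" where
  "R1_fun P1 N \<rho>1 = 1/2 * log 2 (1 + P1 * (1 - \<rho>1^2) / N)"

definition R2_fun :: "real \<Rightarrow> real \<Rightarrow> real \<Rightarrow> real \<Rightarrow> real" where
  "R2_fun P1 P2 N \<rho>1 = (SUP \<rho>2\<in>{0..1::real}.
      min (1/2 * log 2 (1 + P2 * (1 - \<rho>2^2) / N))
          (1/2 * log 2 ((P1 + P2 + 2 * sqrt (P1 * P2) * \<rho>1 * \<rho>2 + N) / (P1 * (1 - \<rho>1^2) + N))))"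

end

theory Submission
  imports Defs
begin

theorem mainTheorem12:
  fixes P1 P2 N \<rho>1 \<epsilon> :: real
  assumes "P1 > 0" "P2 > 0" "N > 0"
    and "0 \<le> \<rho>1" "\<rho>1 < 1"
    and "P2 / N \<ge> \<rho>1^2 / (1 - \<rho>1^2)"
    and "\<epsilon> > 0"
  shows "(R1_fun P1 N \<rho>1, R2_fun P1 P2 N \<rho>1 + \<epsilon>) \<notin> CL_region P1 P2 N"
proof
  assume "(R1_fun P1 N \<rho>1, R2_fun P1 P2 N \<rho>1 + \<epsilon>) \<in> CL_region P1 P2 N"
  then obtain a b where ab: "a \<in> {0..1}" "b \<in> {0..1}"
    and m: "(R1_fun P1 N \<rho>1, R2_fun P1 P2 N \<rho>1 + \<epsilon>) \<in> CL_region_rho P1 P2 N a b"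
    unfolding CL_region_def by blast
  define s where "s = sqrt (P1 * P2)"
  have s0: "s \<ge> 0" unfolding s_def using assms by simp
  define f where "f = (\<lambda>r2::real. min (1/2 * log 2 (1 + P2 * (1 - r2^2) / N))
          (1/2 * log 2 ((P1 + P2 + 2 * sqrt (P1 * P2) * \<rho>1 * r2 + N) / (P1 * (1 - \<rho>1^2) + N))))"
  have R2: "R2_fun P1 P2 N \<rho>1 = (SUP r\<in>{0..1}. f r)" unfolding R2_fun_def f_def by simp
  let ?R2 = "R2_fun P1 P2 N \<rho>1"
  have h1: "1/2 * log 2 (1 + P1 * (1 - \<rho>1^2) / N) \<le> 1/2 * log 2 (1 + P1 * (1 - a^2) / N)"
    and h2: "?R2 + \<epsilon> \<le> 1/2 * log 2 (1 + P2 * (1 - b^2) / N)"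
    and h3: "1/2 * log 2 (1 + P1 * (1 - \<rho>1^2) / N) + (?R2 + \<epsilon>) \<le> 1/2 * log 2 (1 + (P1 + P2 + 2 * s * a * b) / N)"
    using m unfolding CL_region_rho_def R1_fun_def s_def by auto
  have a2: "a^2 \<le> 1" using ab by (simp add: power_le_one)
  have r2: "\<rho>1^2 \<le> 1" using assms by (simp add: power_le_one)
  have pa: "0 < 1 + P1 * (1 - a^2) / N" using a2 assms by (simp add: add_pos_nonneg)
  have pr: "0 < 1 + P1 * (1 - \<rho>1^2) / N" using r2 assms by (simp add: add_pos_nonneg)
  have "log 2 (1 + P1 * (1 - \<rho>1^2) / N) \<le> log 2 (1 + P1 * (1 - a^2) / N)" using h1 by simp
  hence "1 + P1 * (1 - \<rho>1^2) / N \<le> 1 + P1 * (1 - a^2) / N" using pa pr by simp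
  hence "P1 * (1 - \<rho>1^2) \<le> P1 * (1 - a^2)" using assms by (simp add: divide_right_mono_neg divide_le_cancel)
  hence "a^2 \<le> \<rho>1^2" using assms by simp
  hence "a \<le> \<rho>1" using assms ab by (simp add: power_mono_iff)
  hence ab_le: "s * a * b \<le> s * \<rho>1 * b" using s0 ab by (simp add: mult_right_mono mult_left_mono)
  have q0: "0 < 1 + (P1 + P2 + 2 * s * a * b) / N"
    using assms ab s0 by (simp add: add_pos_nonneg)
  have "log 2 (1 + (P1 + P2 + 2 * s * a * b) / N) \<le> log 2 (1 + (P1 + P2 + 2 * s * \<rho>1 * b) / N)"
  proof -
    have "(P1 + P2 + 2 * s * a * b) / N \<le> (P1 + P2 + 2 * s * \<rho>1 * b) / N"
      using ab_le assms by (intro divide_right_mono) auto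
    thus ?thesis using q0 by (intro log_le_cancel_iff[THEN iffD2]) auto
  qed
  hence "?R2 + \<epsilon> \<le> 1/2 * (log 2 (1 + (P1 + P2 + 2 * s * \<rho>1 * b) / N) - log 2 (1 + P1 * (1 - \<rho>1^2) / N))"
    using h3 by simp
  also have "log 2 (1 + (P1 + P2 + 2 * s * \<rho>1 * b) / N) - log 2 (1 + P1 * (1 - \<rho>1^2) / N)
     = log 2 ((1 + (P1 + P2 + 2 * s * \<rho>1 * b) / N) / (1 + P1 * (1 - \<rho>1^2) / N))"
  proof -
    have "0 \<le> s * \<rho>1 * b" using s0 assms ab by simp
    hence "0 < 1 + (P1 + P2 + 2 * s * \<rho>1 * b) / N" using assms by (simp add: add_pos_nonneg)
    thus ?thesis using pr by (subst log_divide) auto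
  qed
  also have "(1 + (P1 + P2 + 2 * s * \<rho>1 * b) / N) / (1 + P1 * (1 - \<rho>1^2) / N)
      = (P1 + P2 + 2 * s * \<rho>1 * b + N) / (P1 * (1 - \<rho>1^2) + N)"
  proof -
    have d: "P1 * (1 - \<rho>1^2) + N > 0" using pr assms by (simp add: field_simps)
    have "(1 + (P1 + P2 + 2 * s * \<rho>1 * b) / N) = (P1 + P2 + 2 * s * \<rho>1 * b + N) / N"
      "1 + P1 * (1 - \<rho>1^2) / N = (P1 * (1 - \<rho>1^2) + N) / N" using assms by (auto simp: field_simps)
    thus ?thesis using d assms by simp
  qed
  finally have h4: "?R2 + \<epsilon> \<le> f b" using h2 unfolding f_def s_def by simp
  have bdd: "bdd_above (f ` {0..1})"
  proof (rule bdd_aboveI2)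
    fix r :: real assume "r \<in> {0..1}"
    have "0 < 1 + P2 * (1 - r^2) / N" using \<open>r \<in> {0..1}\<close> assms
      by (simp add: add_pos_nonneg power_le_one)
    moreover have "1 + P2 * (1 - r^2) / N \<le> 1 + P2 / N" using assms
      by (simp add: divide_right_mono mult_left_le)
    ultimately have "log 2 (1 + P2 * (1 - r^2) / N) \<le> log 2 (1 + P2 / N)" by simp
    thus "f r \<le> 1/2 * log 2 (1 + P2 / N)" unfolding f_def by simp
  qed
  have "f b \<le> ?R2" unfolding R2 using bdd ab by (intro cSUP_upper) auto
  with h4 assms show False by simp
qed

end
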